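(* Let $n\ge1$, $1\le k\le n$, and let $(I_2,I_1)$ be a $k\times k$ minor that is not reverse-admissible, with $\Gamma,\tilde\Gamma,\tilde I_1,\tilde I_2,\mathsf F$ as in the context. Then for every $\Gamma'\subset\{1,\dots,n\}\setminus(I_1\cup I_2)$ with $|\Gamma'|=|\tilde\Gamma|$, the PBW-degree of the minor $(\tilde I_2\cup\mathsf F\cup\Gamma',\ \tilde I_1\cup\mathsf F\cup\Gamma')$ is greater than or equal to the PBW-degree of $(I_2,I_1)$. In other words, each summand on the right hand side of the relation $X_{(I_2,I_1)}=\sum_{\Gamma'}(-1)^{|\Gamma'|}X_{(\tilde I_2\cup\mathsf F\cup\Gamma',\tilde I_1\cup\mathsf F\cup\Gamma')}$ has PBW-degree at least that of $X_{(I_2,I_1)}$.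
   Context: A $k\times k$ minor is a pair $(I_2,I_1)$ of subsets of $\{1,\dots,n\}$ with $|I_1|+|I_2|=k$. Put $\Gamma=I_1\cap I_2=\{\gamma_1<\dots<\gamma_t\}$, $\tilde I_1=I_1\setminus\Gamma$, $\tilde I_2=I_2\setminus\Gamma$. The minor is reverse-admissible if there is $T=\{\tau_1<\dots<\tau_t\}\subset\{1,\dots,n\}\setminus(I_1\cup I_2)$ with $\tau_i\le\gamma_i$ for all $i$. For a non-reverse-admissible minor: let $1\le h_0\le t$ be minimal such that there is a subset $\mathsf T\subset\{1,\dots,n\}\setminus(I_1\cup I_2)$ of size $t-h_0$ which is componentwise $\le(\gamma_{h_0+1},\dots,\gamma_t)$ (elements listed increasingly); choose such $\mathsf T_{h_0+1}=\{\lambda_{h_0+1}<\dots<\lambda_t\}$ maximal for the componentwise partial order; let $b\in\{h_0+1,\dots,t\}$ be maximal with $(\lambda_{h_0+1},\dots,\lambda_b)$ componentwise $\le(\gamma_{h_0},\dots,\gamma_{b-1})$, or $b=h_0$ if no such $b$ exists. Set $\tilde\Gamma=\{\gamma_{h_0},\dots,\gamma_b\}$ and $\mathsf F=\Gamma\setminus\tilde\Gamma$. The PBW-degree of a $k\times k$ minor $(I_2,I_1)$ is $\deg(I_2,I_1)=|I_2|+\#\{i\in I_1: i>k\}$; equivalently, it is the number of entries $>k$ of the increasing sequence in $\mathcal N=\{1<\dots<n<\bar n<\dots<\bar1\}$ ($\bar i=2n+1-i$) formed by $I_1\cup\{\bar i:i\in I_2\}$. In the coordinate ring of the complete symplectic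 flag variety, $X_{(I_2,I_1)}$ denotes the corresponding Plücker coordinate (up to a fixed sign convention). *)

theory Defs
  imports Main
begin

text \<open>Sets of positive integers are identified with their increasing enumerations
  (via sorted_list_of_set). Indices are 1-based: the i-th smallest element.\<close>

definition elt :: "nat set \<Rightarrow> nat \<Rightarrow> nat" where
  "elt A i = sorted_list_of_set A ! (i - 1)"

definition cle :: "nat set \<Rightarrow> nat set \<Rightarrow> bool" where
  "cle A B \<longleftrightarrow> finite A \<and> finite B \<and> card A = card B \<and>
     (\<forall>i<card A. sorted_list_of_set A ! i \<le> sorted_list_of_set B ! i)"

definition compl_set :: "nat \<Rightarrow> nat set \<Rightarrow> nat set \<Rightarrow> nat set" where
  "compl_set n I1 I2 = {1..n} - (I1 \<union> I2)"

definition reverse_admissible :: "nat \<Rightarrow> nat set \<Rightarrow> nat set \<Rightarrow> bool" where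
  "reverse_admissible n I1 I2 \<longleftrightarrow>
     (\<exists>T. T \<subseteq> compl_set n I1 I2 \<and> cle T (I1 \<inter> I2))"

text \<open>The set {gamma_(h+1), ..., gamma_t}.\<close>
definition gtail :: "nat set \<Rightarrow> nat set \<Rightarrow> nat \<Rightarrow> nat set" where
  "gtail I1 I2 h = set (drop h (sorted_list_of_set (I1 \<inter> I2)))"

definition h_ok :: "nat \<Rightarrow> nat set \<Rightarrow> nat set \<Rightarrow> nat \<Rightarrow> bool" where
  "h_ok n I1 I2 h \<longleftrightarrow> 1 \<le> h \<and> h \<le> card (I1 \<inter> I2) \<and>
     (\<exists>T. T \<subseteq> compl_set n I1 I2 \<and> cle T (gtail I1 I2 h))"

definition h0 :: "nat \<Rightarrow> nat set \<Rightarrow> nat set \<Rightarrow> nat" where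
  "h0 n I1 I2 = (LEAST h. h_ok n I1 I2 h)"

definition is_maxT :: "nat \<Rightarrow> nat set \<Rightarrow> nat set \<Rightarrow> nat set \<Rightarrow> bool" where
  "is_maxT n I1 I2 T \<longleftrightarrow>
     T \<subseteq> compl_set n I1 I2 \<and> cle T (gtail I1 I2 (h0 n I1 I2)) \<and>
     (\<forall>T'. T' \<subseteq> compl_set n I1 I2 \<and> cle T' (gtail I1 I2 (h0 n I1 I2)) \<and> cle T T'
        \<longrightarrow> T' = T)"

text \<open>lambda_j = j-th element of T where T is indexed by h0+1, ..., t.
  b_ok: (lambda_(h0+1),...,lambda_b) componentwise \<le> (gamma_h0,...,gamma_(b-1)).\<close>
definition b_ok :: "nat \<Rightarrow> nat set \<Rightarrow> nat set \<Rightarrow> nat set \<Rightarrow> nat \<Rightarrow> bool" where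
  "b_ok n I1 I2 T b \<longleftrightarrow>
     (\<forall>j\<in>{h0 n I1 I2 + 1..b}. elt T (j - h0 n I1 I2) \<le> elt (I1 \<inter> I2) (j - 1))"

definition bval :: "nat \<Rightarrow> nat set \<Rightarrow> nat set \<Rightarrow> nat set \<Rightarrow> nat" where
  "bval n I1 I2 T =
     (if \<exists>b\<in>{h0 n I1 I2 + 1..card (I1 \<inter> I2)}. b_ok n I1 I2 T b
      then (GREATEST b. b \<in> {h0 n I1 I2 + 1..card (I1 \<inter> I2)} \<and> b_ok n I1 I2 T b)
      else h0 n I1 I2)"

definition tGamma :: "nat \<Rightarrow> nat set \<Rightarrow> nat set \<Rightarrow> nat set \<Rightarrow> nat set" where
  "tGamma n I1 I2 T = elt (I1 \<inter> I2) ` {h0 n I1 I2..bval n I1 I2 T}"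

definition Fset :: "nat \<Rightarrow> nat set \<Rightarrow> nat set \<Rightarrow> nat set \<Rightarrow> nat set" where
  "Fset n I1 I2 T = (I1 \<inter> I2) - tGamma n I1 I2 T"

definition pbw_deg :: "nat set \<Rightarrow> nat set \<Rightarrow> nat" where
  "pbw_deg I2 I1 = card I2 + card {i \<in> I1. i > card I1 + card I2}"

end

theory Submission imports Defs begin

lemma rank_le:
  fixes C :: "nat set"
  assumes "finite C" "i < card {c\<in>C. c \<le> y}"
  shows "sorted_list_of_set C ! i \<le> y"
proof (rule ccontr)
  let ?L = "sorted_list_of_set C"
  assume "\<not> ?L ! i \<le> y"
  hence yl: "y < ?L ! i" by simp
  have "{c\<in>C. c \<le> y} \<subseteq> set (take i ?L)"
  proof
    fix c assume c: "c \<in> {c\<in>C. c \<le> y}"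
    then have "c \<in> set ?L" using assms(1) by simp
    then obtain p where p: "p < length ?L" "?L ! p = c" by (auto simp: in_set_conv_nth)
    have "p < i"
    proof (rule ccontr)
      assume "\<not> p < i"
      then have "?L ! i \<le> ?L ! p" using p(1) by (intro sorted_nth_mono) auto
      then show False using c p yl by auto
    qed
    then show "c \<in> set (take i ?L)" using p by (auto simp: in_set_conv_nth)
  qed
  then have "card {c\<in>C. c \<le> y} \<le> card (set (take i ?L))" by (intro card_mono) auto
  also have "\<dots> \<le> i" using card_length[of "take i ?L"] by simp
  finally show False using assms(2) by simp
qed

lemma greedy:
  fixes C :: "nat set" and g :: "nat list"
  assumes "finite C" "sorted g" "distinct g"
    and "\<forall>i<length g. i < card {c\<in>C. c \<le> g!i}"
  shows "\<exists>S\<subseteq>C. cle S (set g)"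
proof (cases "g = []")
  case True then show ?thesis by (intro exI[of _ "{}"]) (auto simp: cle_def)
next
  case False
  let ?L = "sorted_list_of_set C"
  let ?m = "length g"
  have "?m - 1 < card {c\<in>C. c \<le> g!(?m-1)}" using assms(4) False by simp
  also have "\<dots> \<le> card C" using assms(1) by (intro card_mono) auto
  finally have mL: "?m \<le> length ?L" using False by simp
  let ?S = "set (take ?m ?L)"
  have sl: "sorted_list_of_set ?S = take ?m ?L"
    by (rule sorted_list_of_set.idem_if_sorted_distinct) (auto simp: sorted_wrt_take)
  have cS: "card ?S = ?m" using distinct_card[of "take ?m ?L"] mL by simp
  have sg: "sorted_list_of_set (set g) = g"
    by (rule sorted_list_of_set.idem_if_sorted_distinct[OF assms(2,3)])
  have "?S \<subseteq> C" using assms(1) set_take_subset[of ?m ?L] by simp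
  moreover have "cle ?S (set g)"
    unfolding cle_def sl sg cS
  proof (intro conjI allI impI)
    show "finite ?S" by simp
    show "finite (set g)" by simp
    show "?m = card (set g)" using distinct_card[OF assms(3)] by simp
    fix i assume i: "i < ?m"
    have "take ?m ?L ! i = ?L ! i" using i by simp
    also have "\<dots> \<le> g ! i" by (rule rank_le[OF assms(1)]) (use assms(4) i in simp)
    finally show "take ?m ?L ! i \<le> g ! i" .
  qed
  ultimately show ?thesis by blast
qed

theorem lemma4p20:
  fixes n k :: nat and I1 I2 T G' :: "nat set"
  assumes "1 \<le> n" and "1 \<le> k" and "k \<le> n"
    and "I1 \<subseteq> {1..n}" and "I2 \<subseteq> {1..n}" and "card I1 + card I2 = k"
    and "\<not> reverse_admissible n I1 I2"
    and "is_maxT n I1 I2 T"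
    and "G' \<subseteq> {1..n} - (I1 \<union> I2)" and "card G' = card (tGamma n I1 I2 T)"
  shows "pbw_deg ((I2 - (I1 \<inter> I2)) \<union> Fset n I1 I2 T \<union> G')
                 ((I1 - (I1 \<inter> I2)) \<union> Fset n I1 I2 T \<union> G')
         \<ge> pbw_deg I2 I1"
proof -
  define G where "G = I1 \<inter> I2"
  define L where "L = sorted_list_of_set G"
  define t where "t = card G"
  define C where "C = compl_set n I1 I2"
  define h where "h = h0 n I1 I2"
  define b where "b = bval n I1 I2 T"
  define tG where "tG = tGamma n I1 I2 T"
  define TL where "TL = sorted_list_of_set T"
  have finI1: "finite I1" using assms(4) finite_subset by blast
  have finI2: "finite I2" using assms(5) finite_subset by blast
  have finG: "finite G" unfolding G_def using finI1 by simp
  have finC: "finite C" unfolding C_def compl_set_def by simp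
  have lenL: "length L = t" unfolding L_def t_def by simp
  have sortL: "sorted L" and distL: "distinct L" and setL: "set L = G"
    unfolding L_def using finG by auto
  have Gn: "G \<subseteq> {1..n}" unfolding G_def using assms(4) by auto
  have gtail_eq: "\<And>x. gtail I1 I2 x = set (drop x L)" unfolding gtail_def L_def G_def by simp
  have t1: "1 \<le> t"
  proof (rule ccontr)
    assume "\<not> 1 \<le> t"
    then have "G = {}" using finG t_def card_0_eq by fastforce
    then have "reverse_admissible n I1 I2"
      unfolding reverse_admissible_def G_def[symmetric] by (intro exI[of _ "{}"]) (auto simp: cle_def)
    then show False using assms(7) by simp
  qed
  have hokt: "h_ok n I1 I2 t"
    unfolding h_ok_def G_def[symmetric] t_def[symmetric] gtail_eq
    using t1 lenL by (auto intro!: exI[of _ "{}"] simp: cle_def)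
  have hok: "h_ok n I1 I2 h" unfolding h_def h0_def by (rule LeastI[where P = "h_ok n I1 I2", OF hokt])
  have h1: "1 \<le> h" and ht: "h \<le> t" using hok unfolding h_ok_def G_def t_def by auto
  have notP: "\<not> (\<exists>S. S \<subseteq> C \<and> cle S (set (drop (h-1) L)))"
  proof (cases "h = 1")
    case True
    then show ?thesis using assms(7) setL
      unfolding reverse_admissible_def C_def G_def by simp
  next
    case False
    then have "h - 1 < h" "1 \<le> h - 1" "h - 1 \<le> t" using h1 ht by auto
    then have "\<not> h_ok n I1 I2 (h-1)" unfolding h_def h0_def using not_less_Least by blast
    then show ?thesis using \<open>1 \<le> h - 1\<close> \<open>h - 1 \<le> t\<close>
      unfolding h_ok_def C_def gtail_eq G_def[symmetric] t_def[symmetric] by blast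
  qed
  define g where "g = drop (h-1) L"
  have "\<not> (\<forall>i<length g. i < card {c\<in>C. c \<le> g!i})"
    using greedy[OF finC, of g] notP sortL distL unfolding g_def
    by (auto simp: sorted_wrt_drop)
  then obtain i where i: "i < length g" and ci: "card {c\<in>C. c \<le> g!i} \<le> i" by auto
  define y where "y = L ! (h - 1 + i)"
  have ilt: "h - 1 + i < t" using i lenL unfolding g_def by simp
  have gy: "g ! i = y" unfolding g_def y_def using ilt lenL by simp
  have yG: "y \<in> G" unfolding y_def using ilt lenL setL nth_mem by metis
  have yn: "y \<le> n" using yG Gn by auto
  define A where "A = {c\<in>C. c \<le> y}"
  have cA: "card A \<le> i" using ci gy A_def by simp
  have "{1..y} \<subseteq> A \<union> (I1 \<union> I2)" unfolding A_def C_def compl_set_def using yn by auto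
  then have "card {1..y} \<le> card (A \<union> (I1 \<union> I2))" using finI1 finI2 finC A_def
    by (intro card_mono) auto
  also have "\<dots> \<le> card A + card (I1 \<union> I2)" by (rule card_Un_le)
  finally have y1: "y \<le> card A + card (I1 \<union> I2)" by simp
  have "card (I1 \<union> I2) + t = k" using card_Un_Int[OF finI1 finI2] assms(6) t_def G_def by simp
  moreover have "i < t" using i lenL h1 unfolding g_def by simp
  ultimately have yk: "y \<le> k" using y1 cA by linarith
  have cleT: "cle T (set (drop h L))" and TC: "T \<subseteq> C"
    using assms(8) unfolding is_maxT_def h_def[symmetric] gtail_eq C_def by auto
  have finT: "finite T" using cleT cle_def by blast
  have cardT: "card T = t - h" using cleT distinct_card[of "drop h L"] distL lenL
    unfolding cle_def by simp
  have lenTL: "length TL = t - h" and sortTL: "sorted TL" and distTL: "distinct TL"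
    and setTL: "set TL = T"
    unfolding TL_def using finT cardT by auto
  have key: "\<And>x. x \<in> {h..b} \<Longrightarrow> x \<le> h + i \<and> x \<le> t"
  proof -
    fix x assume x: "x \<in> {h..b}"
    show "x \<le> h + i \<and> x \<le> t"
    proof (cases "\<exists>b\<in>{h + 1..t}. b_ok n I1 I2 T b")
      case False
      then have "b = h" unfolding b_def bval_def h_def[symmetric] t_def[symmetric] G_def[symmetric]
        by auto
      then show ?thesis using x ht by auto
    next
      case True
      let ?Q = "\<lambda>b. b \<in> {h+1..t} \<and> b_ok n I1 I2 T b"
      have bQ: "b = Greatest ?Q" using True
        unfolding b_def bval_def h_def[symmetric] t_def[symmetric] G_def[symmetric] by auto
      have "?Q b" unfolding bQ by (rule GreatestI_ex_nat[where b = t]) (use True in auto)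
      then have bt: "b \<le> t" and bok: "b_ok n I1 I2 T b" by auto
      have "x \<le> h + i"
      proof (rule ccontr)
        assume "\<not> x \<le> h + i"
        then have hib: "h + i + 1 \<le> b" using x by auto
        then have mem: "h + i + 1 \<in> {h + 1..b}" by simp
        have "\<forall>j\<in>{h + 1..b}. elt T (j - h) \<le> elt G (j - 1)"
          using bok unfolding b_ok_def h_def[symmetric] G_def[symmetric] .
        then have "elt T (h + i + 1 - h) \<le> elt G (h + i + 1 - 1)" using mem by blast
        then have Tiy: "TL ! i \<le> y" unfolding elt_def TL_def[symmetric] L_def[symmetric] y_def
          using h1 by (simp add: algebra_simps)
        have iT: "i < length TL" using lenTL hib bt by simp
        have "set (take (Suc i) TL) \<subseteq> A"
        proof
          fix c assume "c \<in> set (take (Suc i) TL)"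
          then obtain p where p: "p \<le> i" "c = TL ! p" using iT
            by (auto simp: in_set_conv_nth less_Suc_eq_le)
          have "TL ! p \<le> TL ! i" using sortTL p(1) iT by (intro sorted_nth_mono) auto
          moreover have "TL ! p \<in> T" using setTL p(1) iT nth_mem
            by (metis le_less_trans)
          ultimately show "c \<in> A" using p Tiy TC unfolding A_def by auto
        qed
        then have "card (set (take (Suc i) TL)) \<le> card A" using finC A_def
          by (intro card_mono) auto
        moreover have "card (set (take (Suc i) TL)) = Suc i"
          using distinct_card[of "take (Suc i) TL"] distTL iT by simp
        ultimately show False using cA by simp
      qed
      then show ?thesis using x bt by auto
    qed
  qed
  have tGprop: "tG \<subseteq> G \<and> (\<forall>z\<in>tG. z \<le> k)"
  proof (intro conjI ballI subsetI)
    fix z assume "z \<in> tG"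
    then obtain x where x: "x \<in> {h..b}" "z = L ! (x - 1)"
      unfolding tG_def tGamma_def h_def[symmetric] b_def[symmetric] elt_def
        L_def[symmetric] G_def[symmetric] by auto
    have xx: "x \<le> h + i" "x \<le> t" "1 \<le> x" using key[OF x(1)] x(1) h1 by auto
    show "z \<in> G" using x(2) xx lenL setL nth_mem
      by (metis diff_less le_less_trans less_one not_le)
    have "L ! (x - 1) \<le> L ! (h - 1 + i)" using sortL xx ilt
      by (intro sorted_nth_mono) (auto simp: lenL)
    then show "z \<le> k" using x(2) yk y_def by simp
  qed
  define F where "F = G - tG"
  have FF: "Fset n I1 I2 T = F" unfolding F_def Fset_def tG_def G_def by simp
  have finG': "finite G'" using assms(9) finite_subset by blast
  have fintG: "finite tG" using tGprop finG finite_subset by blast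
  have cF: "card F = t - card tG" unfolding F_def t_def using tGprop finG
    by (simp add: card_Diff_subset fintG)
  have ctG: "card tG \<le> t" unfolding t_def using tGprop finG card_mono by blast
  have cJ: "card ((X - G) \<union> F \<union> G') = card X" if X: "G \<subseteq> X" "X \<subseteq> I1 \<union> I2" "finite X" for X
  proof -
    have d1: "(X - G) \<inter> F = {}" unfolding F_def by auto
    have d2: "((X - G) \<union> F) \<inter> G' = {}" using assms(9) X(2) F_def G_def by auto
    have "card ((X - G) \<union> F \<union> G') = card (X - G) + card F + card G'"
      using d1 d2 X(3) finG finG' by (simp add: card_Un_disjoint F_def)
    moreover have "card (X - G) = card X - t" using X finG t_def by (simp add: card_Diff_subset)
    moreover have "card X \<ge> t" using X card_mono t_def by blast
    ultimately show ?thesis using cF ctG assms(10) tG_def by simp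
  qed
  have c2: "card ((I2 - G) \<union> F \<union> G') = card I2" using finI2 G_def by (intro cJ) auto
  have c1: "card ((I1 - G) \<union> F \<union> G') = card I1" using finI1 G_def by (intro cJ) auto
  have sub: "{x\<in>I1. x > k} \<subseteq> {x \<in> (I1 - G) \<union> F \<union> G'. x > k}"
    using tGprop unfolding F_def by auto
  have "card {x\<in>I1. x > k} \<le> card {x \<in> (I1 - G) \<union> F \<union> G'. x > k}"
    using finI1 finG finG' F_def by (intro card_mono[OF _ sub]) auto
  then show ?thesis
    unfolding pbw_deg_def G_def[symmetric] FF using c1 c2 assms(6) by simp
qed

end
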